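(* Let $P=(p_1,\dots,p_l)$ be a distribution on $\{x_1,\dots,x_l\}$ with $p_j\in(0,1)$ for all $j$, and let $\hat P=(\hat p_j)_{j=1}^l$ be the empirical distribution constructed from $T\ge 1$ i.i.d. draws from $P$. Define $\rho_1(p)\coloneqq\sqrt{(1-p)/p}$, $\rho_2(p)\coloneqq\rho_1(p)+\rho_1(1-p)$, $c^{(s)}\coloneqq\sum_{j=1}^l\rho_1(p_j)$, and $\tilde c^{(s)}\coloneqq\max\{\rho_2(p_S): S\subset[l],\,1\le |S|<l\}$ where $p_S\coloneqq\sum_{j\in S}p_j$. Then there exist constants $C^{(s)},\tilde C^{(s)}\ge 0$ depending only on $P$ (not on $T$) such that for every $T\ge1$, $$\tilde c^{(s)}\sqrt{\frac{1}{2\pi T}}-\frac{\tilde C^{(s)}}{T}\;\le\;\mathbb E\big[D_s(\hat P,P)\big]\;\le\; c^{(s)}\sqrt{\frac{1}{2\pi T}}+\frac{C^{(s)}}{T}.$$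
   Context: The separation distance between distributions $P$ and $Q$ on $\{x_1,\dots,x_l\}$ with all $q_j>0$ is $D_s(P,Q)\coloneqq\max_{j\in[l]}(1-p_j/q_j)$; thus $D_s(\hat P,P)=\max_j(1-\hat p_j/p_j)$. The empirical distribution has $\hat p_j=T_j/T$ where $T_j$ is the number of draws equal to $x_j$. *)

theory Defs
  imports Complex_Main
begin

(* Outcomes are indexed 0..l-1; p j is the probability of outcome x_j. *)

definition rho1 :: "real \<Rightarrow> real" where
  "rho1 q = sqrt ((1 - q) / q)"

definition rho2 :: "real \<Rightarrow> real" where
  "rho2 q = rho1 q + rho1 (1 - q)"

definition sep_dist :: "nat \<Rightarrow> (nat \<Rightarrow> real) \<Rightarrow> (nat \<Rightarrow> real) \<Rightarrow> real" where
  "sep_dist l P Q = Max ((\<lambda>j. 1 - P j / Q j) ` {0..<l})"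

definition empirical :: "nat list \<Rightarrow> nat \<Rightarrow> real" where
  "empirical xs j = real (length (filter (\<lambda>x. x = j) xs)) / real (length xs)"

definition samples :: "nat \<Rightarrow> nat \<Rightarrow> nat list set" where
  "samples l T = {xs. length xs = T \<and> set xs \<subseteq> {0..<l}}"

definition iid_expect :: "nat \<Rightarrow> (nat \<Rightarrow> real) \<Rightarrow> nat \<Rightarrow> (nat list \<Rightarrow> real) \<Rightarrow> real" where
  "iid_expect l p T f = (\<Sum>xs\<in>samples l T. (\<Prod>x\<leftarrow>xs. p x) * f xs)"

definition c_s :: "nat \<Rightarrow> (nat \<Rightarrow> real) \<Rightarrow> real" where
  "c_s l p = (\<Sum>j<l. rho1 (p j))"

definition c_s_tilde :: "nat \<Rightarrow> (nat \<Rightarrow> real) \<Rightarrow> real" where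
  "c_s_tilde l p = Max {rho2 (\<Sum>j\<in>S. p j) | S. S \<subseteq> {0..<l} \<and> 1 \<le> card S \<and> card S < l}"

end

theory Submission
  imports Defs "HOL-Analysis.Analysis" "HOL-Real_Asymp.Real_Asymp"
begin


lemma ln_lower2:
  fixes x :: real assumes "0 \<le> x"
  shows "2*x/(2+x) \<le> ln (1+x)"
proof -
  let ?f = "\<lambda>t::real. ln (1+t) - 2*t/(2+t)"
  have "?f 0 \<le> ?f x"
  proof (rule DERIV_nonneg_imp_nondecreasing[OF assms])
    fix t :: real assume t: "0 \<le> t" "t \<le> x"
    have "DERIV ?f t :> (1/(1+t) - 4/(2+t)^2)"
      using t by (auto intro!: derivative_eq_intros simp: field_simps power2_eq_square)
    moreover have "1/(1+t) - 4/(2+t)^2 \<ge> 0"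
    proof -
      have h: "4*(1+t) \<le> (2+t)^2" by (simp add: power2_eq_square algebra_simps)
      have "4/(2+t)^2 \<le> 1/(1+t)" using t h
        by (simp add: divide_simps)
      thus ?thesis by simp
    qed
    ultimately show "\<exists>y. DERIV ?f t :> y \<and> y \<ge> 0" by blast
  qed
  thus ?thesis by simp
qed

lemma ln_upper3:
  fixes x :: real assumes "0 \<le> x"
  shows "ln (1+x) \<le> x - x^2/2 + x^3/3"
proof -
  let ?f = "\<lambda>t::real. t - t^2/2 + t^3/3 - ln (1+t)"
  have "?f 0 \<le> ?f x"
  proof (rule DERIV_nonneg_imp_nondecreasing[OF assms])
    fix t :: real assume t: "0 \<le> t" "t \<le> x"
    have "DERIV ?f t :> (1 - t + t^2 - 1/(1+t))"
      using t by (auto intro!: derivative_eq_intros simp: field_simps power2_eq_square)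
    moreover have "1 - t + t^2 - 1/(1+t) \<ge> 0"
    proof -
      have h: "1 \<le> (1 - t + t^2)*(1+t)" using t by (simp add: power2_eq_square algebra_simps)
      have "1/(1+t) \<le> 1 - t + t^2" using t h
        by (simp add: divide_simps)
      thus ?thesis by simp
    qed
    ultimately show "\<exists>y. DERIV ?f t :> y \<and> y \<ge> 0" by blast
  qed
  thus ?thesis by simp
qed


definition Lst :: "nat \<Rightarrow> real" where
  "Lst j = ln (fact j) + real j - (real j + 1/2) * ln (real j)"

lemma Lst_diff:
  assumes "j \<ge> 1"
  shows "Lst j - Lst (Suc j) = (real j + 1/2) * ln (1 + 1/real j) - 1"
proof -
  have j: "real j > 0" using assms by simp
  have "1 + 1/real j = real (Suc j)/real j" using j by (simp add: field_simps)
  hence eq: "ln (1 + 1/real j) = ln (real (Suc j)) - ln (real j)"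
    using j by (simp add: ln_div)
  have eq2: "ln (fact (Suc j) :: real) = ln (real (Suc j)) + ln (fact j)"
    by (subst fact_Suc) (rule ln_mult_pos, auto)
  show ?thesis unfolding Lst_def eq eq2 by (simp add: algebra_simps)
qed

lemma Lst_diff_nonneg:
  assumes "j \<ge> 1" shows "Lst (Suc j) \<le> Lst j"
proof -
  have j: "real j > 0" using assms by simp
  have "2*(1/real j)/(2+1/real j) \<le> ln (1 + 1/real j)" by (rule ln_lower2) simp
  moreover have "2*(1/real j)/(2+1/real j) = 1/(real j + 1/2)" using j by (simp add: field_simps)
  ultimately have "1 \<le> (real j + 1/2) * ln (1 + 1/real j)" using j
    by (simp add: divide_simps mult.commute)
  thus ?thesis using Lst_diff[OF assms] by simp
qed

lemma Lst_diff_upper: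
  assumes "j \<ge> 1" shows "Lst j - Lst (Suc j) \<le> 1/real j - 1/real (Suc j)"
proof -
  have j: "real j \<ge> 1" using assms by simp
  let ?x = "1/real j"
  have x: "0 < ?x" "?x \<le> 1" using j by auto
  have "ln (1 + ?x) \<le> ?x - ?x^2/2 + ?x^3/3" by (rule ln_upper3) (use x in simp)
  hence "(real j + 1/2) * ln (1 + ?x) \<le> (real j + 1/2) * (?x - ?x^2/2 + ?x^3/3)"
    using j by (intro mult_left_mono) auto
  also have "\<dots> - 1 \<le> 1/real j - 1/real (Suc j)"
  proof -
    define y where "y = real j"
    have y: "y \<ge> 1" using j y_def by simp
    have "(y + 1/2) * (1/y - (1/y)^2/2 + (1/y)^3/3) - 1 = 1/(12*y^2) + 1/(6*y^3)"
      using y by (simp add: field_simps power2_eq_square power3_eq_cube)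
    also have "\<dots> \<le> 1/y - 1/(y+1)"
    proof -
      have "1/y - 1/(y+1) = 1/(y*(y+1))" using y by (simp add: field_simps)
      moreover have "1/(12*y^2) + 1/(6*y^3) = (y+2)/(12*y^3)" using y
        by (simp add: field_simps power2_eq_square power3_eq_cube)
      moreover have "(y+2)/(12*y^3) \<le> 1/(y*(y+1))"
      proof -
        have a0: "1*(y*y) \<le> y*(y*y)" using y by (intro mult_right_mono) auto
        have c0: "y*1 \<le> y*y" using y by (intro mult_left_mono) auto
        have a: "y*y \<le> y*(y*y)" using a0 by simp
        have b: "y \<le> y*(y*y)" using a c0 by simp
        have cub: "y^3 = y*(y*y)" by (simp add: power3_eq_cube)
        have e: "(y+2)*(y*(y+1)) = y*(y*y) + 3*(y*y) + 2*y" by algebra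
        have "(y+2)*(y*(y+1)) \<le> 12*y^3" unfolding e cub using a b y by (smt (verit) mult_nonneg_nonneg)
        thus ?thesis using y by (simp add: divide_simps)
      qed
      ultimately show ?thesis by simp
    qed
    finally show ?thesis by (simp add: y_def add.commute)
  qed
  finally show ?thesis using Lst_diff[OF assms] by simp
qed



lemma Lst_tele:
  assumes "j \<ge> 1"
  shows "Lst j - Lst (j+N) \<le> 1/real j - 1/real (j+N) \<and> Lst (j+N) \<le> Lst j"
proof (induction N)
  case 0 then show ?case by simp
next
  case (Suc N)
  have jN: "j + N \<ge> 1" using assms by simp
  have "Lst (j+N) - Lst (Suc (j+N)) \<le> 1/real (j+N) - 1/real (Suc (j+N))"
    by (rule Lst_diff_upper[OF jN])
  moreover have "Lst (Suc (j+N)) \<le> Lst (j+N)" by (rule Lst_diff_nonneg[OF jN])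
  ultimately show ?case using Suc by simp
qed

lemma wallis_step:
  fixes P F G x :: real
  assumes "4*(x+1)^2 - 1 > 0" "G > 0" "F > 0" "P > 0" "x \<ge> 0"
  shows "(P * F)^4 / (G^2 * (2*x+1)) * ((4*(x+1)^2) / (4*(x+1)^2 - 1)) =
         (2*P * ((x+1)*F))^4 / (((2*x+2)*(2*x+1)*G)^2 * (2*(x+1)+1))"
proof -
  have e: "4*(x+1)^2 - 1 = (2*x+1)*(2*x+3)" by (simp add: algebra_simps power2_eq_square)
  show ?thesis unfolding e using assms
    by (simp add: divide_simps power_mult_distrib) (simp add: algebra_simps power2_eq_square power4_eq_xxxx)
qed

lemma wallis_fact:
  "(\<Prod>k=1..n. (4*real k^2) / (4*real k^2 - 1)) =
     (2^n * fact n)^4 / ((fact (2*n))^2 * (2*real n+1))"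
proof (induction n)
  case 0 then show ?case by simp
next
  case (Suc n)
  have f2: "(fact (2 * Suc n) :: real) = (2*real n+2)*(2*real n+1)*fact (2*n)"
  proof -
    have "2 * Suc n = Suc (Suc (2*n))" by simp
    hence "(fact (2 * Suc n) :: real) = fact (Suc (Suc (2*n)))" by (simp only:)
    also have "\<dots> = real (Suc (Suc (2*n))) * (real (Suc (2*n)) * fact (2*n))"
      by (simp only: fact_Suc)
    finally show ?thesis by (simp add: algebra_simps)
  qed
  have pos: "(4*real (Suc n)^2 - 1) > 0"
  proof -
    have "real (Suc n)^2 \<ge> 1" by simp
    thus ?thesis by linarith
  qed
  have "(\<Prod>k=1..Suc n. (4*real k^2) / (4*real k^2 - 1)) =
        (2^n * fact n)^4 / ((fact (2*n))^2 * (2*real n+1)) * ((4*real (Suc n)^2) / (4*real (Suc n)^2 - 1))"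
    using Suc by simp
  also have "\<dots> = (2^Suc n * fact (Suc n))^4 / ((fact (2*Suc n))^2 * (2*real (Suc n)+1))"
  proof -
    have eqA: "(2::real)^Suc n * fact (Suc n) = 2*2^n*((real n+1)*fact n)" by (simp add: algebra_simps)
    have eqB: "real (Suc n) = real n + 1" by simp
    show ?thesis unfolding f2 eqA eqB
      by (rule wallis_step) (use pos eqB in \<open>simp_all add: add.commute\<close>)
  qed
  finally show ?case .
qed

lemma Lst_conv: obtains lam where "\<And>j. j \<ge> 1 \<Longrightarrow> lam \<le> Lst j \<and> Lst j \<le> lam + 1/real j"
  and "Lst \<longlonglongrightarrow> lam"
proof -
  define u where "u i = Lst (Suc i)" for i
  have dec: "decseq u" unfolding u_def
    by (rule decseq_SucI) (rule Lst_diff_nonneg, simp)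
  have bnd: "\<forall>i. Lst 1 - 1 \<le> u i"
  proof
    fix i
    have h1: "Lst 1 - Lst (1+i) \<le> 1/real 1 - 1/real (1+i)" using Lst_tele[of 1 i] by blast
    have h2: "0 \<le> 1/real (1+i)" by simp
    have h3: "1/real 1 = (1::real)" by simp
    have "Lst 1 - 1 \<le> Lst (1+i)" using h1 h2 h3 by linarith
    thus "Lst 1 - 1 \<le> u i" unfolding u_def by simp
  qed
  obtain lam where lim: "u \<longlonglongrightarrow> lam" and le: "\<forall>i. lam \<le> u i"
    using decseq_convergent[OF dec bnd] by blast
  have limL: "Lst \<longlonglongrightarrow> lam" using lim unfolding u_def by (simp add: filterlim_sequentially_Suc)
  have "lam \<le> Lst j \<and> Lst j \<le> lam + 1/real j" if j: "j \<ge> 1" for j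
  proof
    obtain i where i: "j = Suc i" using j by (cases j) auto
    show "lam \<le> Lst j" using le i u_def by simp
    have lim2: "(\<lambda>N. Lst (j + N)) \<longlonglongrightarrow> lam"
      using LIMSEQ_ignore_initial_segment[OF limL, of j] by (simp add: add.commute)
    have "Lst j - 1/real j \<le> lam"
    proof (rule LIMSEQ_le_const[OF lim2], intro exI allI impI)
      fix N :: nat
      have "Lst j - Lst (j+N) \<le> 1/real j - 1/real (j+N)" using Lst_tele[OF j] by blast
      moreover have "1/real (j+N) \<ge> 0" by simp
      ultimately show "Lst j - 1/real j \<le> Lst (j+N)" by linarith
    qed
    thus "Lst j \<le> lam + 1/real j" by simp
  qed
  thus ?thesis using that limL by blast
qed

lemma ln_wallis:
  assumes "n \<ge> 1"
  shows "ln (\<Prod>k=1..n. (4*real k^2) / (4*real k^2 - 1)) =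
    4 * Lst n - 2 * Lst (2*n) - ln 2 + ln (real n / (2*real n + 1))"
proof -
  have n: "real n > 0" using assms by simp
  have fpos: "(fact m :: real) > 0" for m by simp
  have "ln ((2^n * fact n)^4 / ((fact (2*n))^2 * (2*real n+1)) :: real) =
     4 * (real n * ln 2 + ln (fact n)) - 2 * ln (fact (2*n)) - ln (2*real n+1)"
    using n by (simp add: ln_div ln_mult_pos ln_realpow)
  also have "ln (fact n) = Lst n - real n + (real n + 1/2) * ln (real n)"
    unfolding Lst_def by simp
  also have "ln (fact (2*n)) = Lst (2*n) - 2*real n + (2*real n + 1/2) * (ln 2 + ln (real n))"
    unfolding Lst_def using n by (simp add: ln_mult_pos)
  also have "ln (real n / (2*real n + 1)) = ln (real n) - ln (2*real n+1)"
    using n by (simp add: ln_div)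
  ultimately show ?thesis unfolding wallis_fact by (simp add: algebra_simps)
qed

lemma Lst_lim: "Lst \<longlonglongrightarrow> ln (sqrt (2*pi))"
proof -
  obtain lam where b: "\<And>j. j \<ge> 1 \<Longrightarrow> lam \<le> Lst j \<and> Lst j \<le> lam + 1/real j"
    and lim: "Lst \<longlonglongrightarrow> lam" using Lst_conv by blast
  define W where "W n = (\<Prod>k=1..n. (4*real k^2) / (4*real k^2 - 1))" for n
  have "W \<longlonglongrightarrow> pi/2" unfolding W_def by (rule wallis)
  hence l1: "(\<lambda>n. ln (W (Suc n))) \<longlonglongrightarrow> ln (pi/2)"
    by (intro tendsto_ln) (simp_all add: filterlim_sequentially_Suc)
  have lim2: "(\<lambda>n. Lst (2*n)) \<longlonglongrightarrow> lam"
    by (rule LIMSEQ_subseq_LIMSEQ[OF lim, unfolded o_def]) (simp add: strict_mono_def)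
  have lim3: "(\<lambda>n. real n / (2*real n + 1)) \<longlonglongrightarrow> 1/2" by real_asymp
  have "(\<lambda>n. 4 * Lst n - 2 * Lst (2*n) - ln 2 + ln (real n / (2*real n + 1)))
      \<longlonglongrightarrow> 4*lam - 2*lam - ln 2 + ln (1/2)"
    by (intro tendsto_intros lim lim2 lim3) simp
  hence l2: "(\<lambda>n. ln (W (Suc n))) \<longlonglongrightarrow> 4*lam - 2*lam - ln 2 + ln (1/2)"
    unfolding W_def
    by (subst ln_wallis, simp, subst filterlim_sequentially_Suc) (simp del: of_nat_Suc)
  have "ln (pi/2) = 2*lam - 2 * ln 2" using LIMSEQ_unique[OF l1 l2] by (simp add: ln_div)
  hence "2*lam = ln (pi/2) + 2 * ln 2" by simp
  also have "\<dots> = ln (2*pi)" by (simp add: ln_div ln_mult_pos)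
  finally have "lam = ln (sqrt (2*pi))" by (simp add: ln_sqrt)
  thus ?thesis using lim by simp
qed



definition bn :: "nat \<Rightarrow> real \<Rightarrow> nat \<Rightarrow> real" where
  "bn n r k = real (n choose k) * r^k * (1-r)^(n-k)"

lemma bn_nonneg: "0 \<le> r \<Longrightarrow> r \<le> 1 \<Longrightarrow> 0 \<le> bn n r k"
  unfolding bn_def by simp

lemma bn_sum: "(\<Sum>k\<le>n. bn n r k) = 1"
  using binomial_ring[of r "1-r" n] unfolding bn_def by simp

lemma choose_absorb: "(n - k) * (n choose k) = Suc k * (n choose Suc k)"
proof (cases n)
  case 0 then show ?thesis by (cases k) auto
next
  case (Suc m)
  have "(n - k) * (n choose k) = n * (m choose k)" using binomial_absorb_comp[of n k] Suc by simp
  also have "\<dots> = Suc k * (n choose Suc k)" using Suc_times_binomial[of k m] Suc by simp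
  finally show ?thesis .
qed

lemma bn_step:
  assumes "k \<le> n"
  shows "(real k - real n * r) * bn n r k
     = real k * (1-r) * bn n r k - real (Suc k) * (1-r) * bn n r (Suc k)"
proof -
  have key: "real (Suc k) * (1-r) * bn n r (Suc k) = real (n-k) * r * bn n r k"
  proof (cases "k = n")
    case True then show ?thesis by (simp add: bn_def)
  next
    case False
    then have kn: "k < n" using assms by simp
    have c: "real (Suc k) * real (n choose Suc k) = real (n-k) * real (n choose k)"
      using choose_absorb[of n k] by (metis of_nat_mult)
    have p: "(1-r)^(n-k) = (1-r) * (1-r)^(n - Suc k)"
      using kn by (metis Suc_diff_Suc power_Suc)
    have "real (Suc k) * (1-r) * bn n r (Suc k)
        = (real (Suc k) * real (n choose Suc k)) * (r * r^k) * ((1-r) * (1-r)^(n - Suc k))"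
      unfolding bn_def by (simp add: algebra_simps)
    also have "\<dots> = (real (n-k) * real (n choose k)) * (r * r^k) * (1-r)^(n-k)"
      unfolding c p by simp
    also have "\<dots> = real (n-k) * r * bn n r k" unfolding bn_def by (simp add: algebra_simps)
    finally show ?thesis .
  qed
  have nk: "real (n-k) = real n - real k" using assms by simp
  show ?thesis unfolding key nk by (simp add: algebra_simps)
qed

lemma bn_tele:
  assumes "m \<le> n"
  shows "(\<Sum>k=m..n. (real k - real n * r) * bn n r k) = real m * (1-r) * bn n r m"
proof -
  define t where "t k = real k * (1-r) * bn n r k" for k
  have "(\<Sum>k=m..n. (real k - real n * r) * bn n r k) = (\<Sum>k=m..n. -(t (Suc k) - t k))"
    by (rule sum.cong) (auto simp: bn_step t_def)
  also have "\<dots> = - (\<Sum>k=m..n. t (Suc k) - t k)" by (simp add: sum_subtractf)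
  also have "\<dots> = t m - t (Suc n)" using assms by (subst sum_Suc_diff) auto
  also have "t (Suc n) = 0" by (simp add: t_def bn_def)
  finally show ?thesis by (simp add: t_def)
qed

lemma bn_mean: "(\<Sum>k\<le>n. (real k - real n * r) * bn n r k) = 0"
  using bn_tele[of 0 n r] by (simp add: atLeast0AtMost)

definition md :: "nat \<Rightarrow> real \<Rightarrow> real" where
  "md n r = (\<Sum>k\<le>n. bn n r k * max 0 (r - real k / real n))"

lemma md_formula:
  assumes n: "n \<ge> 1" and r: "0 < r" "r < 1"
  defines "m \<equiv> nat \<lceil>real n * r\<rceil>"
  shows "md n r = real m * (1-r) * bn n r m / real n"
proof -
  have npos: "real n > 0" using n by simp
  have mle: "m \<le> n"
  proof -
    have h: "real n * r \<le> real n" using r npos by simp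
    show ?thesis unfolding m_def using h by simp
  qed
  have "real n * r > 0" using r npos by simp
  hence c0: "\<lceil>real n * r\<rceil> \<ge> 0" by simp
  have "real m = of_int \<lceil>real n * r\<rceil>" unfolding m_def using c0 by simp
  hence mge: "real m \<ge> real n * r" by (simp add: le_of_int_ceiling)
  have lt: "real k < real n * r" if "k < m" for k
  proof -
    have "int k < \<lceil>real n * r\<rceil>" using that unfolding m_def by linarith
    thus ?thesis by (simp add: less_ceiling_iff)
  qed
  have dis: "{..n} = {..<m} \<union> {m..n}" using mle by auto
  have "md n r = (\<Sum>k\<in>{..<m}. bn n r k * max 0 (r - real k / real n))
                + (\<Sum>k\<in>{m..n}. bn n r k * max 0 (r - real k / real n))"
    unfolding md_def dis by (rule sum.union_disjoint) auto
  also have "(\<Sum>k\<in>{m..n}. bn n r k * max 0 (r - real k / real n)) = 0"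
  proof (rule sum.neutral, rule ballI)
    fix k assume "k \<in> {m..n}"
    hence "real k \<ge> real n * r" using mge by auto
    hence "r - real k / real n \<le> 0" using npos by (simp add: field_simps)
    thus "bn n r k * max 0 (r - real k / real n) = 0" by simp
  qed
  also have "(\<Sum>k\<in>{..<m}. bn n r k * max 0 (r - real k / real n))
      = (\<Sum>k\<in>{..<m}. - ((real k - real n * r) * bn n r k)) / real n"
    unfolding sum_divide_distrib
  proof (rule sum.cong[OF refl])
    fix k assume "k \<in> {..<m}"
    hence "real k < real n * r" using lt by auto
    hence hm: "max 0 (r - real k / real n) = r - real k / real n" using npos by (simp add: field_simps)
    show "bn n r k * max 0 (r - real k / real n) = - ((real k - real n * r) * bn n r k) / real n"
      unfolding hm using npos by (simp add: field_simps)
  qed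
  also have "(\<Sum>k\<in>{..<m}. - ((real k - real n * r) * bn n r k))
     = (\<Sum>k\<in>{m..n}. (real k - real n * r) * bn n r k) - (\<Sum>k\<le>n. (real k - real n * r) * bn n r k)"
    unfolding dis by (subst sum.union_disjoint) (auto simp: sum_negf)
  also have "\<dots> = real m * (1-r) * bn n r m" using bn_tele[OF mle] bn_mean by simp
  finally show ?thesis by simp
qed

lemma md_upper_tail:
  assumes n: "n \<ge> 1"
  shows "(\<Sum>k\<le>n. bn n r k * max 0 (real k / real n - r)) = md n r"
proof -
  have npos: "real n > 0" using n by simp
  have "(\<Sum>k\<le>n. bn n r k * max 0 (real k / real n - r)) - md n r
     = (\<Sum>k\<le>n. ((real k - real n * r) * bn n r k) / real n)"
    unfolding md_def sum_subtractf[symmetric]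
    by (rule sum.cong[OF refl]) (use npos in \<open>auto simp: field_simps max_def\<close>)
  also have "\<dots> = 0" using bn_mean[of n r] by (simp add: sum_divide_distrib[symmetric])
  finally show ?thesis by simp
qed

lemma md_le1: assumes "0 \<le> r" "r \<le> 1" shows "md n r \<le> 1"
proof -
  have "md n r \<le> (\<Sum>k\<le>n. bn n r k * 1)" unfolding md_def
  proof (rule sum_mono, rule mult_left_mono)
    fix k assume "k \<in> {..n}"
    have "real k / real n \<ge> 0" by simp
    hence "r - real k / real n \<le> 1" using assms by linarith
    thus "max 0 (r - real k / real n) \<le> 1" by simp
    show "0 \<le> bn n r k" using assms bn_nonneg by simp
  qed
  thus ?thesis using bn_sum by simp
qed



lemma Lst_bounds:
  assumes "j \<ge> 1"
  shows "ln (sqrt (2*pi)) \<le> Lst j \<and> Lst j \<le> ln (sqrt (2*pi)) + 1/real j"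
proof -
  obtain lam where b: "\<And>j. j \<ge> 1 \<Longrightarrow> lam \<le> Lst j \<and> Lst j \<le> lam + 1/real j"
    and lim: "Lst \<longlonglongrightarrow> lam" using Lst_conv by blast
  have "lam = ln (sqrt (2*pi))" using LIMSEQ_unique[OF lim Lst_lim] .
  thus ?thesis using b[OF assms] by simp
qed

lemma exp_minus_one_le: "0 \<le> x \<Longrightarrow> exp x - 1 \<le> x * exp (x::real)"
proof -
  assume x: "0 \<le> x"
  have "1 + (-x) \<le> exp (-x)" by (rule exp_ge_add_one_self)
  hence "(1 - x) * exp x \<le> exp (-x) * exp x" by (intro mult_right_mono) auto
  also have "exp (-x) * exp x = 1" by (simp add: exp_minus field_simps)
  finally show ?thesis by (simp add: algebra_simps)
qed

lemma rho_close:
  fixes Y L D x :: real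
  assumes "0 \<le> Y" "Y \<le> 1" "x \<ge> 1" "D \<ge> 0" "-D/x \<le> L" "L \<le> D/x"
  shows "\<bar>Y * exp L - Y\<bar> \<le> D * exp D / x"
proof -
  have Dx1: "D/x \<le> D/1" using assms by (intro divide_left_mono) auto
  have Dx: "0 \<le> D/x" "D/x \<le> D" using assms Dx1 by auto
  have up: "exp L - 1 \<le> D * exp D / x"
  proof -
    have "exp L - 1 \<le> exp (D/x) - 1" using assms by simp
    also have "\<dots> \<le> (D/x) * exp (D/x)" by (rule exp_minus_one_le) (use Dx in simp)
    also have "\<dots> \<le> (D/x) * exp D" using Dx by (intro mult_left_mono) auto
    finally show ?thesis by simp
  qed
  have lo: "1 - exp L \<le> D * exp D / x"
  proof -
    have "1 + L \<le> exp L" by (rule exp_ge_add_one_self)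
    hence "1 - exp L \<le> D/x" using assms by linarith
    also have "D/x \<le> D * exp D / x"
    proof -
      have "D * 1 \<le> D * exp D" using assms by (intro mult_left_mono) auto
      thus ?thesis using assms by (simp add: divide_right_mono)
    qed
    finally show ?thesis .
  qed
  have "\<bar>exp L - 1\<bar> \<le> D * exp D / x" using up lo by linarith
  hence "Y * \<bar>exp L - 1\<bar> \<le> 1 * (D * exp D / x)"
    using assms by (intro mult_mono) auto
  moreover have "\<bar>Y * exp L - Y\<bar> = Y * \<bar>exp L - 1\<bar>"
  proof -
    have "Y * exp L - Y = Y * (exp L - 1)" by (simp add: algebra_simps)
    thus ?thesis using assms by (simp add: abs_mult)
  qed
  ultimately show ?thesis by simp
qed

lemma E3_bounds:
  fixes a b d :: real
  assumes "a > 0" "b > 0" "0 \<le> d" "d \<le> 1" "b - d > 0"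
  shows "(a+d) * ln (a/(a+d)) + (b-d) * ln (b/(b-d)) \<le> 0"
    and "(a+d) * ln (a/(a+d)) + (b-d) * ln (b/(b-d)) \<ge> -(1/a + 1/b)"
proof -
  have p1: "a/(a+d) > 0" "b/(b-d) > 0" using assms by auto
  have "(a+d) * ln (a/(a+d)) \<le> (a+d) * (a/(a+d) - 1)"
    using assms ln_le_minus_one[OF p1(1)] by (intro mult_left_mono) auto
  moreover have "(b-d) * ln (b/(b-d)) \<le> (b-d) * (b/(b-d) - 1)"
    using assms ln_le_minus_one[OF p1(2)] by (intro mult_left_mono) auto
  moreover have "(a+d) * (a/(a+d) - 1) + (b-d) * (b/(b-d) - 1) = 0"
    using assms by (simp add: field_simps)
  ultimately show "(a+d) * ln (a/(a+d)) + (b-d) * ln (b/(b-d)) \<le> 0" by linarith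
  have p2: "(a+d)/a > 0" "(b-d)/b > 0" using assms by auto
  have l1: "ln (a/(a+d)) = - ln ((a+d)/a)" using assms by (simp add: ln_div)
  have l2: "ln (b/(b-d)) = - ln ((b-d)/b)" using assms by (simp add: ln_div)
  have "(a+d) * ln (a/(a+d)) \<ge> (a+d) * (1 - (a+d)/a)"
    unfolding l1 using assms ln_le_minus_one[OF p2(1)] by (intro mult_left_mono) auto
  moreover have "(b-d) * ln (b/(b-d)) \<ge> (b-d) * (1 - (b-d)/b)"
    unfolding l2 using assms ln_le_minus_one[OF p2(2)] by (intro mult_left_mono) auto
  moreover have "(a+d) * (1 - (a+d)/a) + (b-d) * (1 - (b-d)/b) = - (d^2/a + d^2/b)"
    using assms by (simp add: field_simps power2_eq_square)
  moreover have "d^2/a \<le> 1/a" "d^2/b \<le> 1/b"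
  proof -
    have "d^2 \<le> 1" using assms by (simp add: power_le_one)
    thus "d^2/a \<le> 1/a" "d^2/b \<le> 1/b" using assms by (simp_all add: divide_right_mono)
  qed
  ultimately show "(a+d) * ln (a/(a+d)) + (b-d) * ln (b/(b-d)) \<ge> -(1/a + 1/b)" by linarith
qed

lemma lam_alg:
  fixes lm lk lx lr lq lA Ln Lm Lk M K :: real
  shows "lm + lq + (Ln - (M+K) + (M+K+1/2)*lx) - (Lm - M + (M+1/2)*lm) - (Lk - K + (K+1/2)*lk)
     + M*lr + K*lq - lx - (lr + lq - 2*lA - lx)/2
   = lA + Ln - Lm - Lk + (lq + lm - lk - lr)/2 + (M*(lx + lr - lm) + K*(lx + lq - lk))"
  by (simp add: field_simps)

lemma md_main:
  assumes r: "0 < r" "r < 1" and n1: "n \<ge> 1" and nq: "real n * (1-r) \<ge> 2"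
  shows "\<bar>md n r - sqrt (r*(1-r)/(2*pi*real n))\<bar>
     \<le> (2/r + 3/(1-r) + 1 + 1/(r*(1-r))) * exp (2/r + 3/(1-r) + 1 + 1/(r*(1-r))) / real n"
proof -
  define q where "q = 1 - r"
  define x where "x = real n"
  define m where "m = nat \<lceil>x * r\<rceil>"
  define k where "k = n - m"
  define D where "D = 2/r + 3/q + 1 + 1/(r*q)"
  define A where "A = sqrt (2*pi)"
  define Y where "Y = sqrt (r*q/(2*pi*x))"
  have q: "0 < q" "q < 1" using r q_def by auto
  have x: "x \<ge> 1" using n1 x_def by simp
  have xq: "x * q \<ge> 2" using nq x_def q_def by simp
  have xr: "x * r > 0" using x r by simp
  have c0: "\<lceil>x * r\<rceil> \<ge> 0" using xr by simp
  have mreal: "real m = of_int \<lceil>x * r\<rceil>" unfolding m_def using c0 by simp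
  have mge: "real m \<ge> x * r" unfolding mreal by simp
  have mlt: "real m < x * r + 1" unfolding mreal using ceiling_correct[of "x*r"] by linarith
  have rq: "r + q = 1" using q_def by simp
  have xs0: "x * r + x * q = x * (r + q)" by (simp add: distrib_left)
  hence xsplit: "x = x * r + x * q" using rq by simp
  have "real m < x - 1" using mlt xq xsplit by linarith
  hence mn: "m < n" using x_def by simp
  have kreal: "real k = x - real m" using mn unfolding k_def x_def by simp
  define d where "d = real m - x * r"
  have d: "0 \<le> d" "d < 1" using mge mlt d_def by auto
  have kd: "real k = x * q - d" using kreal d_def xsplit by linarith
  have md: "real m = x * r + d" using d_def by simp
  have mpos: "real m > 0" using mge xr by linarith
  have kpos: "real k > 0" using kd d xq by linarith
  have kge: "real k \<ge> x * q / 2" using kd d xq by linarith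
  have kle: "real k \<le> x * q" using kd d by linarith
  have fm: "m \<ge> 1" "k \<ge> 1" using mpos kpos by auto
  have xmk: "x = real m + real k" using kreal by simp
  have bc: "real (n choose m) = fact n / (fact m * fact k)"
    unfolding k_def using mn by (simp add: binomial_fact)
  have mdf0: "md n r = real m * (1-r) * bn n r m / real n"
    using md_formula[OF n1 r] unfolding m_def x_def by simp
  have mdf: "md n r = real m * q * (fact n / (fact m * fact k) * r^m * q^k) / x"
    unfolding mdf0 bn_def bc by (simp add: q_def x_def k_def)
  have lnfact: "ln (fact j :: real) = Lst j - real j + (real j + 1/2) * ln (real j)" for j
    unfolding Lst_def by simp
  have fpos: "(fact j :: real) > 0" for j by simp
  have lnmd: "ln (md n r) = ln (real m) + ln q + ln (fact n) - ln (fact m) - ln (fact k)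
       + real m * ln r + real k * ln q - ln x"
    unfolding mdf using mpos q r x fpos
    by (simp add: ln_mult_pos ln_div ln_realpow)
  have lnY: "ln Y = (ln r + ln q - 2 * ln A - ln x) / 2"
  proof -
    have "ln Y = ln (r*q/(2*pi*x)) / 2" unfolding Y_def using r q x by (simp add: ln_sqrt)
    also have "ln (r*q/(2*pi*x)) = ln r + ln q - ln (2*pi) - ln x"
      using r q x by (simp add: ln_mult_pos ln_div)
    also have "ln (2*pi) = 2 * ln A" unfolding A_def by (simp add: ln_sqrt)
    finally show ?thesis by simp
  qed
  define T1 where "T1 = ln A + Lst n - Lst m - Lst k"
  define T2 where "T2 = (ln q + ln (real m) - ln (real k) - ln r) / 2"
  define T3 where "T3 = real m * (ln x + ln r - ln (real m)) + real k * (ln x + ln q - ln (real k))"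
  have Lam: "ln (md n r) - ln Y = T1 + T2 + T3"
    unfolding lnmd lnY T1_def T2_def T3_def lnfact
    unfolding x_def[symmetric] xmk by (rule lam_alg)
  have bn: "ln A \<le> Lst n \<and> Lst n \<le> ln A + 1/x" using Lst_bounds[OF n1] unfolding A_def x_def by simp
  have bm: "ln A \<le> Lst m \<and> Lst m \<le> ln A + 1/real m" using Lst_bounds[OF fm(1)] unfolding A_def by simp
  have bk: "ln A \<le> Lst k \<and> Lst k \<le> ln A + 1/real k" using Lst_bounds[OF fm(2)] unfolding A_def by simp
  have im: "1/real m \<le> 1/(x*r)" using mge xr by (simp add: frac_le)
  have ik: "1/real k \<le> 2/(x*q)"
  proof -
    have "1/real k \<le> 1/(x*q/2)" using kge q x by (intro frac_le) auto
    thus ?thesis by simp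
  qed
  have T1u: "T1 \<le> 1/x" unfolding T1_def using bn bm bk by linarith
  have T1l: "T1 \<ge> -(1/(x*r) + 2/(x*q))" unfolding T1_def using bn bm bk im ik by linarith
  define X where "X = q * real m / (real k * r)"
  have Xpos: "X > 0" unfolding X_def using q r mpos kpos by simp
  have lnX: "ln X = ln q + ln (real m) - ln (real k) - ln r"
    unfolding X_def using q r mpos kpos by (simp add: ln_mult_pos ln_div)
  have X1: "X - 1 = d / (real k * r)"
  proof -
    have "q * real m - real k * r = d" unfolding md kd using rq by (simp add: algebra_simps)
      (metis add_diff_cancel_left' distrib_left mult.commute mult.right_neutral)
    thus ?thesis unfolding X_def using kpos r by (simp add: field_simps)
  qed
  have "X - 1 \<ge> 0" unfolding X1 using d kpos r by simp
  hence "ln X \<ge> 0" using Xpos by simp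
  hence T2l: "T2 \<ge> 0" unfolding T2_def lnX[symmetric] by simp
  have "X - 1 \<le> 2/(x*q*r)"
  proof -
    have "d / (real k * r) \<le> 1 / (real k * r)" using d kpos r by (simp add: divide_right_mono)
    also have "\<dots> \<le> 1 / (x*q/2 * r)" using kge kpos r q x by (intro frac_le) auto
    finally show ?thesis unfolding X1 by simp
  qed
  hence "ln X \<le> 2/(x*q*r)" using ln_le_minus_one[OF Xpos] by linarith
  hence T2u: "T2 \<le> 1/(x*q*r)" unfolding T2_def lnX[symmetric] by simp
  have T3eq: "T3 = (x*r+d) * ln ((x*r)/(x*r+d)) + (x*q-d) * ln ((x*q)/(x*q-d))"
  proof -
    have "ln ((x*r)/(x*r+d)) = ln x + ln r - ln (real m)"
      unfolding md[symmetric] using x r mpos by (simp add: ln_div ln_mult_pos)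
    moreover have "ln ((x*q)/(x*q-d)) = ln x + ln q - ln (real k)"
      unfolding kd[symmetric] using x q kpos by (simp add: ln_div ln_mult_pos)
    ultimately show ?thesis unfolding T3_def md[symmetric] kd[symmetric] by simp
  qed
  have xqd: "x*q - d > 0" using kd kpos by linarith
  have xqp: "x*q > 0" using xq by linarith
  have T3u: "T3 \<le> 0" unfolding T3eq using E3_bounds(1)[OF xr xqp d(1) _ xqd] d by simp
  have T3l: "T3 \<ge> -(1/(x*r) + 1/(x*q))" unfolding T3eq using E3_bounds(2)[OF xr xqp d(1) _ xqd] d by simp
  have Dpos: "D \<ge> 0" unfolding D_def using r q by simp
  have lamu: "T1 + T2 + T3 \<le> D/x"
  proof -
    have "T1 + T2 + T3 \<le> 1/x + 1/(x*q*r)" using T1u T2u T3u by linarith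
    also have "\<dots> = (1 + 1/(r*q))/x" using x by (simp add: field_simps)
    also have "\<dots> \<le> D/x" unfolding D_def using r q x by (intro divide_right_mono) auto
    finally show ?thesis .
  qed
  have laml: "T1 + T2 + T3 \<ge> -D/x"
  proof -
    have "(2/r + 3/q)/x \<le> D/x" unfolding D_def using r q x by (intro divide_right_mono) auto
    hence "-D/x \<le> -((2/r + 3/q)/x)" by simp
    also have "-((2/r + 3/q)/x) = -(1/(x*r) + 2/(x*q)) + 0 + -(1/(x*r) + 1/(x*q))"
      using x r q by (simp add: field_simps)
    also have "\<dots> \<le> T1 + T2 + T3" using T1l T2l T3l by linarith
    finally show ?thesis .
  qed
  have mdpos: "md n r > 0" unfolding mdf using mpos q r x by simp
  have Ypos: "Y > 0" unfolding Y_def using r q x by simp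
  have Yle: "Y \<le> 1"
  proof -
    have "r*q \<le> 1" using r q by (simp add: mult_le_one)
    moreover have "1*1 \<le> (2*pi)*x" using x pi_gt3 by (intro mult_mono) auto
    ultimately have "r*q/(2*pi*x) \<le> 1" by simp
    thus ?thesis unfolding Y_def by simp
  qed
  have "md n r = Y * exp (T1 + T2 + T3)"
  proof -
    have "md n r = exp (ln (md n r))" using mdpos by simp
    also have "ln (md n r) = ln Y + (T1 + T2 + T3)" using Lam by simp
    also have "exp (ln Y + (T1 + T2 + T3)) = Y * exp (T1 + T2 + T3)" using Ypos by (simp add: exp_add)
    finally show ?thesis .
  qed
  hence "\<bar>md n r - Y\<bar> \<le> D * exp D / x"
    using rho_close[of Y x D "T1+T2+T3"] Ypos Yle x Dpos lamu laml by simp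
  thus ?thesis unfolding Y_def D_def q_def x_def by simp
qed



lemma bn_rec:
  "(\<Sum>k\<le>Suc T. bn (Suc T) r k * g k)
     = r * (\<Sum>k\<le>T. bn T r k * g (Suc k)) + (1-r) * (\<Sum>k\<le>T. bn T r k * g k)"
proof -
  define q where "q = 1 - r"
  have "(\<Sum>k\<le>Suc T. bn (Suc T) r k * g k) = bn (Suc T) r 0 * g 0 + (\<Sum>k\<le>T. bn (Suc T) r (Suc k) * g (Suc k))"
    by (rule sum.atMost_Suc_shift)
  moreover have "(\<Sum>k\<le>T. bn (Suc T) r (Suc k) * g (Suc k))
     = (\<Sum>k\<le>T. real (T choose k) * r^Suc k * q^(T-k) * g (Suc k)) + (\<Sum>k\<le>T. real (T choose Suc k) * r^Suc k * q^(T-k) * g (Suc k))"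
    unfolding sum.distrib[symmetric] by (rule sum.cong) (auto simp: bn_def q_def algebra_simps)
  moreover have "(\<Sum>k\<le>T. real (T choose k) * r^Suc k * q^(T-k) * g (Suc k)) = r * (\<Sum>k\<le>T. bn T r k * g (Suc k))"
    unfolding sum_distrib_left by (rule sum.cong) (auto simp: bn_def q_def algebra_simps)
  moreover have "bn (Suc T) r 0 * g 0 + (\<Sum>k\<le>T. real (T choose Suc k) * r^Suc k * q^(T-k) * g (Suc k))
      = (1-r) * (\<Sum>k\<le>T. bn T r k * g k)"
  proof -
    define h where "h k = real (T choose k) * r^k * q^(Suc T - k) * g k" for k
    have "(1-r) * (\<Sum>k\<le>T. bn T r k * g k) = (\<Sum>k\<le>T. h k)"
      unfolding sum_distrib_left by (rule sum.cong) (auto simp: h_def bn_def q_def Suc_diff_le algebra_simps)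
    also have "\<dots> = (\<Sum>k\<le>Suc T. h k)" by (simp add: h_def)
    also have "\<dots> = h 0 + (\<Sum>k\<le>T. h (Suc k))" by (rule sum.atMost_Suc_shift)
    also have "\<dots> = bn (Suc T) r 0 * g 0 + (\<Sum>k\<le>T. real (T choose Suc k) * r^Suc k * q^(T-k) * g (Suc k))"
      by (simp add: h_def bn_def q_def)
    finally show ?thesis by simp
  qed
  ultimately show ?thesis by (simp add: algebra_simps)
qed

definition cnt :: "nat set \<Rightarrow> nat list \<Rightarrow> nat" where
  "cnt S xs = length (filter (\<lambda>x. x \<in> S) xs)"

lemma samples_0: "samples l 0 = {[]}" unfolding samples_def by auto

lemma samples_Suc: "samples l (Suc T) = (\<lambda>(x,xs). x # xs) ` ({0..<l} \<times> samples l T)"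
  unfolding samples_def
  by (auto simp: length_Suc_conv image_iff)

lemma finite_samples: "finite (samples l T)"
proof -
  have "samples l T = {xs. set xs \<subseteq> {0..<l} \<and> length xs = T}" unfolding samples_def by auto
  thus ?thesis using finite_lists_length_eq[of "{0..<l}" T] by simp
qed

lemma iid_count:
  assumes S: "S \<subseteq> {0..<l}" and ps: "(\<Sum>j<l. p j) = 1"
  shows "iid_expect l p T (\<lambda>xs. g (cnt S xs)) = (\<Sum>k\<le>T. bn T (\<Sum>j\<in>S. p j) k * g k)"
proof (induction T arbitrary: g)
  case 0
  show ?case unfolding iid_expect_def samples_0 by (simp add: bn_def cnt_def)
next
  case (Suc T)
  define r where "r = (\<Sum>j\<in>S. p j)"
  define B where "B T' f = (\<Sum>k\<le>T'. bn T' r k * f k)" for T' f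
  have inj: "inj_on (\<lambda>(x,xs). x # xs) ({0..<l} \<times> samples l T)" by (auto simp: inj_on_def)
  have "iid_expect l p (Suc T) (\<lambda>xs. g (cnt S xs))
     = (\<Sum>(x,xs)\<in>{0..<l} \<times> samples l T. (p x * (\<Prod>y\<leftarrow>xs. p y)) * g (cnt S (x#xs)))"
    unfolding iid_expect_def samples_Suc by (subst sum.reindex[OF inj]) (simp add: case_prod_unfold)
  also have "\<dots> = (\<Sum>x\<in>{0..<l}. p x * iid_expect l p T (\<lambda>xs. g (cnt S xs + (if x \<in> S then 1 else 0))))"
    unfolding sum.cartesian_product[symmetric] iid_expect_def sum_distrib_left
    by (rule sum.cong[OF refl], rule sum.cong[OF refl]) (auto simp: cnt_def algebra_simps)
  also have "\<dots> = (\<Sum>x\<in>{0..<l}. p x * (if x \<in> S then B T (\<lambda>k. g (Suc k)) else B T g))"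
  proof -
    have IH1: "iid_expect l p T (\<lambda>xs. g (Suc (cnt S xs))) = B T (\<lambda>k. g (Suc k))"
      using Suc.IH[of "\<lambda>c. g (Suc c)"] by (simp add: B_def r_def)
    have IH2: "iid_expect l p T (\<lambda>xs. g (cnt S xs)) = B T g"
      using Suc.IH[of g] by (simp add: B_def r_def)
    show ?thesis by (rule sum.cong) (auto simp: IH1 IH2)
  qed
  also have "\<dots> = (\<Sum>x\<in>S. p x) * B T (\<lambda>k. g (Suc k)) + (\<Sum>x\<in>{0..<l} - S. p x) * B T g"
  proof -
    have "(\<Sum>x\<in>{0..<l}. p x * (if x \<in> S then B T (\<lambda>k. g (Suc k)) else B T g))
       = (\<Sum>x\<in>S. p x * B T (\<lambda>k. g (Suc k))) + (\<Sum>x\<in>{0..<l} - S. p x * B T g)"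
      using S by (subst sum.subset_diff[of S "{0..<l}"]) (auto intro!: sum.cong)
    thus ?thesis by (simp add: sum_distrib_right)
  qed
  also have "(\<Sum>x\<in>{0..<l} - S. p x) = 1 - r"
    using S ps unfolding r_def by (simp add: sum_diff atLeast0LessThan)
  finally show ?case using bn_rec[of T r g] unfolding B_def r_def by simp
qed



lemma md_asym:
  assumes r: "0 < r" "r < 1"
  shows "\<exists>K\<ge>0. \<forall>n\<ge>1. \<bar>md n r - sqrt (r*(1-r)/(2*pi*real n))\<bar> \<le> K / real n"
proof -
  define D where "D = 2/r + 3/(1-r) + 1 + 1/(r*(1-r))"
  define K where "K = D * exp D + 4/(1-r)"
  have Dpos: "D \<ge> 0" unfolding D_def using r by simp
  have K0: "K \<ge> 0" unfolding K_def using Dpos r by simp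
  have "\<bar>md n r - sqrt (r*(1-r)/(2*pi*real n))\<bar> \<le> K / real n" if n: "n \<ge> 1" for n
  proof (cases "real n * (1-r) \<ge> 2")
    case True
    have "\<bar>md n r - sqrt (r*(1-r)/(2*pi*real n))\<bar> \<le> D * exp D / real n"
      using md_main[OF r n True] unfolding D_def .
    also have "\<dots> \<le> K / real n" unfolding K_def using r n by (intro divide_right_mono) auto
    finally show ?thesis .
  next
    case False
    have Y: "sqrt (r*(1-r)/(2*pi*real n)) \<le> 1"
    proof -
      have "r*(1-r) \<le> 1" using r by (simp add: mult_le_one)
      moreover have "1*1 \<le> (2*pi)*real n" using n pi_gt3 by (intro mult_mono) auto
      ultimately have "r*(1-r)/(2*pi*real n) \<le> 1" by simp
      thus ?thesis by simp
    qed
    have Y0: "sqrt (r*(1-r)/(2*pi*real n)) \<ge> 0" using r by simp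
    have m0: "md n r \<ge> 0" unfolding md_def using r by (intro sum_nonneg mult_nonneg_nonneg bn_nonneg) auto
    have m1: "md n r \<le> 1" using md_le1 r by simp
    have "\<bar>md n r - sqrt (r*(1-r)/(2*pi*real n))\<bar> \<le> 2" using Y Y0 m0 m1 by linarith
    also have "2 \<le> (4/(1-r)) / real n"
    proof -
      have "real n * (1-r) < 2" using False by simp
      hence "2 * real n \<le> 4/(1-r)" using r by (simp add: field_simps)
      moreover have "real n > 0" using n by simp
      ultimately show ?thesis by (subst pos_le_divide_eq) auto
    qed
    also have "\<dots> \<le> K / real n" unfolding K_def using Dpos n by (intro divide_right_mono) auto
    finally show ?thesis .
  qed
  thus ?thesis using K0 by blast
qed

lemma cnt_sum: assumes "finite S" shows "(\<Sum>j\<in>S. cnt {j} xs) = cnt S xs"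
proof (induction xs)
  case Nil show ?case by (simp add: cnt_def)
next
  case (Cons a xs)
  have "(\<Sum>j\<in>S. cnt {j} (a#xs)) = (\<Sum>j\<in>S. (if a = j then 1 else 0) + cnt {j} xs)"
    by (rule sum.cong) (auto simp: cnt_def)
  also have "\<dots> = (\<Sum>j\<in>S. if a = j then 1 else 0) + cnt S xs"
    using Cons by (simp add: sum.distrib)
  also have "(\<Sum>j\<in>S. if a = j then 1 else (0::nat)) = (if a \<in> S then 1 else 0)"
    using assms by (simp add: sum.delta)
  finally show ?case by (simp add: cnt_def)
qed

lemma empirical_cnt: "empirical xs j = real (cnt {j} xs) / real (length xs)"
  unfolding empirical_def cnt_def by (simp add: eq_commute)

lemma iid_mono:
  assumes "\<And>j. j < l \<Longrightarrow> 0 \<le> p j" "\<And>xs. xs \<in> samples l T \<Longrightarrow> f xs \<le> g xs"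
  shows "iid_expect l p T f \<le> iid_expect l p T g"
  unfolding iid_expect_def
proof (rule sum_mono, rule mult_left_mono)
  fix xs assume xs: "xs \<in> samples l T"
  show "f xs \<le> g xs" by (rule assms(2)[OF xs])
  show "0 \<le> (\<Prod>x\<leftarrow>xs. p x)"
    using xs assms(1) unfolding samples_def by (intro prod_list_nonneg) auto
qed

lemma iid_sum: "finite J \<Longrightarrow> iid_expect l p T (\<lambda>xs. \<Sum>j\<in>J. f j xs) = (\<Sum>j\<in>J. iid_expect l p T (f j))"
  unfolding iid_expect_def sum_distrib_left by (rule sum.swap)

lemma iid_cmult: "iid_expect l p T (\<lambda>xs. c * f xs) = c * iid_expect l p T f"
  unfolding iid_expect_def sum_distrib_left by (rule sum.cong) auto

lemma iid_add: "iid_expect l p T (\<lambda>xs. f xs + g xs) = iid_expect l p T f + iid_expect l p T g"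
  unfolding iid_expect_def by (simp add: distrib_left sum.distrib)



lemma sep_upper:
  assumes xs: "xs \<in> samples l T" and T: "T \<ge> 1" and l: "l \<ge> 1"
    and p: "\<And>j. j < l \<Longrightarrow> 0 < p j"
  shows "sep_dist l (empirical xs) p \<le> (\<Sum>j<l. (1/p j) * max 0 (p j - real (cnt {j} xs) / real T))"
  unfolding sep_dist_def
proof (subst Max_le_iff, simp, use l in simp, rule ballI)
  have len: "length xs = T" using xs unfolding samples_def by simp
  fix y assume "y \<in> (\<lambda>j. 1 - empirical xs j / p j) ` {0..<l}"
  then obtain j where j: "j < l" and y: "y = 1 - empirical xs j / p j" by auto
  have pj: "p j > 0" using p j by simp
  have "y = (1/p j) * (p j - real (cnt {j} xs) / real T)"
    unfolding y empirical_cnt len using pj by (simp add: field_simps)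
  also have "\<dots> \<le> (1/p j) * max 0 (p j - real (cnt {j} xs) / real T)"
    using pj by (intro mult_left_mono) auto
  also have "\<dots> \<le> (\<Sum>j<l. (1/p j) * max 0 (p j - real (cnt {j} xs) / real T))"
    using j p by (intro member_le_sum) (auto intro!: divide_nonneg_pos)
  finally show "y \<le> (\<Sum>j<l. (1/p j) * max 0 (p j - real (cnt {j} xs) / real T))" .
qed

lemma sep_lower:
  assumes xs: "xs \<in> samples l T" and T: "T \<ge> 1"
    and p: "\<And>j. j < l \<Longrightarrow> 0 < p j" and ps: "(\<Sum>j<l. p j) = 1"
    and S: "S \<subseteq> {0..<l}" and r: "0 < (\<Sum>j\<in>S. p j)" "(\<Sum>j\<in>S. p j) < 1"
  shows "(1/(\<Sum>j\<in>S. p j)) * max 0 ((\<Sum>j\<in>S. p j) - real (cnt S xs) / real T)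
        + (1/(1 - (\<Sum>j\<in>S. p j))) * max 0 (real (cnt S xs) / real T - (\<Sum>j\<in>S. p j))
       \<le> sep_dist l (empirical xs) p"
proof -
  define r where "r = (\<Sum>j\<in>S. p j)"
  define M where "M = sep_dist l (empirical xs) p"
  define s where "s = real (cnt S xs) / real T"
  have len: "length xs = T" using xs unfolding samples_def by simp
  have Tp: "real T > 0" using T by simp
  have l: "l \<ge> 1"
  proof (rule ccontr)
    assume "\<not> l \<ge> 1" hence "l = 0" by simp
    thus False using ps by simp
  qed
  have each: "p j - empirical xs j \<le> M * p j" if j: "j < l" for j
  proof -
    have "1 - empirical xs j / p j \<le> M" unfolding M_def sep_dist_def
      using j by (intro Max_ge) auto
    thus ?thesis using p[OF j] by (simp add: field_simps)
  qed
  have emp_sum: "(\<Sum>j\<in>A. empirical xs j) = real (cnt A xs) / real T" if "finite A" for A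
    unfolding empirical_cnt len sum_divide_distrib[symmetric] using cnt_sum[OF that] 
    by (metis of_nat_sum)
  have fS: "finite S" using S finite_subset by blast
  have h1: "r - s \<le> M * r"
  proof -
    have "(\<Sum>j\<in>S. p j - empirical xs j) \<le> (\<Sum>j\<in>S. M * p j)"
      using S by (intro sum_mono each) auto
    thus ?thesis unfolding r_def s_def sum_subtractf emp_sum[OF fS] sum_distrib_left by simp
  qed
  have call: "cnt {0..<l} xs = T"
    using xs unfolding samples_def cnt_def by (subst filter_True) auto
  have h2: "s - r \<le> M * (1 - r)"
  proof -
    let ?C = "{0..<l} - S"
    have "(\<Sum>j\<in>?C. p j - empirical xs j) \<le> (\<Sum>j\<in>?C. M * p j)"
      by (intro sum_mono each) auto
    moreover have "(\<Sum>j\<in>?C. p j) = 1 - r"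
      using S ps unfolding r_def by (simp add: sum_diff atLeast0LessThan)
    moreover have "(\<Sum>j\<in>?C. empirical xs j) = 1 - s"
    proof -
      have "(\<Sum>j\<in>?C. empirical xs j) = (\<Sum>j\<in>{0..<l}. empirical xs j) - (\<Sum>j\<in>S. empirical xs j)"
        using S by (simp add: sum_diff)
      also have "\<dots> = 1 - s" unfolding emp_sum[OF fS] emp_sum[OF finite_atLeastLessThan] call s_def using Tp by simp
      finally show ?thesis .
    qed
    ultimately show ?thesis unfolding sum_subtractf sum_distrib_left[symmetric] by simp
  qed
  have r0: "0 < r" "r < 1" using r r_def by auto
  have "(1/r) * max 0 (r - s) + (1/(1-r)) * max 0 (s - r) \<le> M"
  proof (cases "s \<le> r")
    case True
    have "(1/r) * (r - s) \<le> M" using h1 r0 by (simp add: field_simps)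
    thus ?thesis using True by simp
  next
    case False
    have "(1/(1-r)) * (s - r) \<le> M" using h2 r0 by (simp add: field_simps)
    thus ?thesis using False by simp
  qed
  thus ?thesis unfolding r_def s_def M_def .
qed



lemma rho1_id:
  assumes "0 < p" "0 < y"
  shows "(1/p) * sqrt (p*(1-p)*y) = rho1 p * sqrt y"
proof -
  have h: "(1/p) = sqrt (1/p^2)" using assms by (simp add: real_sqrt_divide)
  have "(1/p) * sqrt (p*(1-p)*y) = sqrt (1/p^2) * sqrt (p*(1-p)*y)" by (simp only: h)
  also have "\<dots> = sqrt (1/p^2 * (p*(1-p)*y))" by (rule real_sqrt_mult[symmetric])
  also have "1/p^2 * (p*(1-p)*y) = (1-p)/p * y" using assms by (simp add: field_simps power2_eq_square)
  also have "sqrt ((1-p)/p * y) = rho1 p * sqrt y" unfolding rho1_def by (rule real_sqrt_mult)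
  finally show ?thesis .
qed

lemma rho2_id:
  assumes "0 < r" "r < 1"
  shows "rho2 r = 1 / sqrt (r*(1-r))"
proof -
  define q where "q = 1 - r"
  have q: "0 < q" using assms q_def by simp
  have "rho2 r = sqrt (q/r) + sqrt (r/q)" unfolding rho2_def rho1_def q_def by simp
  also have "\<dots> = sqrt (1/(r*q))"
  proof (rule real_sqrt_unique[symmetric])
    have ab: "sqrt (q/r) * sqrt (r/q) = 1" using assms q by (simp add: real_sqrt_mult[symmetric])
    have "(sqrt (q/r) + sqrt (r/q))^2 = q/r + r/q + 2 * (sqrt (q/r) * sqrt (r/q))"
      using assms q by (simp add: power2_eq_square algebra_simps)
    also have "\<dots> = (q+r)^2/(r*q)" unfolding ab using assms q by (simp add: field_simps power2_eq_square)
    also have "q + r = 1" using q_def by simp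
    finally show "(sqrt (q/r) + sqrt (r/q))^2 = 1/(r*q)" by simp
    show "0 \<le> sqrt (q/r) + sqrt (r/q)" using assms q by (intro add_nonneg_nonneg real_sqrt_ge_zero) auto
  qed
  finally show ?thesis unfolding q_def by (simp add: real_sqrt_divide)
qed

lemma rho2_id2:
  assumes "0 < r" "r < 1" "0 < y"
  shows "rho2 r * sqrt y = sqrt (r*(1-r)*y) / (r*(1-r))"
proof -
  have rq: "r*(1-r) > 0" using assms by simp
  obtain w where w: "w = sqrt (r*(1-r))" by blast
  have wp: "w > 0" using rq w by simp
  have ww: "r*(1-r) = w*w" using rq w by simp
  have e1: "sqrt (r*(1-r)*y) = w * sqrt y" unfolding w by (rule real_sqrt_mult)
  have a: "rho2 r * sqrt y = sqrt y / w" unfolding rho2_id[OF assms(1,2)] w by simp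
  have b: "sqrt (r*(1-r)*y) / (r*(1-r)) = (w * sqrt y) / (r*(1-r))" using e1 by simp
  also have "\<dots> = (w * sqrt y) / (w*w)" using ww by simp
  also have "\<dots> = sqrt y / w" using wp by simp
  finally show ?thesis using a by simp
qed

theorem mainTheorem2:
  fixes l :: nat and p :: "nat \<Rightarrow> real"
  assumes p_range: "\<And>j. j < l \<Longrightarrow> 0 < p j \<and> p j < 1"
    and p_sum: "(\<Sum>j<l. p j) = 1"
  shows "\<exists>C Ct. C \<ge> 0 \<and> Ct \<ge> 0 \<and>
    (\<forall>T::nat. T \<ge> 1 \<longrightarrow>
       c_s_tilde l p * sqrt (1 / (2 * pi * real T)) - Ct / real T
         \<le> iid_expect l p T (\<lambda>xs. sep_dist l (empirical xs) p)
     \<and> iid_expect l p T (\<lambda>xs. sep_dist l (empirical xs) p)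
         \<le> c_s l p * sqrt (1 / (2 * pi * real T)) + C / real T)"
proof -
  have ppos: "\<And>j. j < l \<Longrightarrow> 0 < p j" using p_range by blast
  have l2: "l \<ge> 2"
  proof (rule ccontr)
    assume "\<not> l \<ge> 2"
    hence "l = 0 \<or> l = 1" by auto
    thus False
    proof
      assume "l = 0" thus False using p_sum by simp
    next
      assume "l = 1" thus False using p_sum p_range[of 0] by simp
    qed
  qed
  define Kf where "Kf r = (SOME K. K \<ge> 0 \<and> (\<forall>n\<ge>1. \<bar>md n r - sqrt (r*(1-r)/(2*pi*real n))\<bar> \<le> K / real n))" for r
  have Kf: "Kf r \<ge> 0 \<and> (\<forall>n\<ge>1. \<bar>md n r - sqrt (r*(1-r)/(2*pi*real n))\<bar> \<le> Kf r / real n)"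
    if "0 < r" "r < 1" for r
    unfolding Kf_def by (rule someI_ex) (use md_asym[OF that] in blast)
  define C where "C = (\<Sum>j<l. Kf (p j) / p j)"
  have C0: "C \<ge> 0" unfolding C_def using Kf p_range by (intro sum_nonneg divide_nonneg_pos) auto
  define Sset where "Sset = {rho2 (\<Sum>j\<in>S. p j) | S. S \<subseteq> {0..<l} \<and> 1 \<le> card S \<and> card S < l}"
  have "Sset \<subseteq> (\<lambda>S. rho2 (\<Sum>j\<in>S. p j)) ` Pow {0..<l}" unfolding Sset_def by auto
  hence finS: "finite Sset" by (rule finite_subset) simp
  have "rho2 (\<Sum>j\<in>{0}. p j) \<in> Sset" unfolding Sset_def using l2 by force
  hence neS: "Sset \<noteq> {}" by blast
  have "c_s_tilde l p \<in> Sset" unfolding c_s_tilde_def Sset_def[symmetric] using finS neS by simp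
  then obtain S where S: "S \<subseteq> {0..<l}" "1 \<le> card S" "card S < l"
    and cst: "c_s_tilde l p = rho2 (\<Sum>j\<in>S. p j)" unfolding Sset_def by blast
  define r where "r = (\<Sum>j\<in>S. p j)"
  have fS: "finite S" using S(1) finite_subset by blast
  have r0: "0 < r" unfolding r_def
  proof (rule sum_pos[OF fS])
    show "S \<noteq> {}" using S(2) by auto
    show "\<And>i. i \<in> S \<Longrightarrow> 0 < p i" using S(1) ppos by auto
  qed
  have r1: "r < 1"
  proof -
    have "{0..<l} - S \<noteq> {}"
    proof
      assume "{0..<l} - S = {}"
      hence "S = {0..<l}" using S(1) by auto
      thus False using S(3) by simp
    qed
    hence "0 < (\<Sum>j\<in>{0..<l} - S. p j)" using ppos by (intro sum_pos) auto
    moreover have "(\<Sum>j\<in>{0..<l} - S. p j) = 1 - r"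
      using S(1) p_sum unfolding r_def by (simp add: sum_diff atLeast0LessThan)
    ultimately show ?thesis by simp
  qed
  define Ct where "Ct = Kf r / (r*(1-r))"
  have Ct0: "Ct \<ge> 0" unfolding Ct_def using Kf[OF r0 r1] r0 r1 by simp
  have main: "c_s_tilde l p * sqrt (1 / (2 * pi * real T)) - Ct / real T
         \<le> iid_expect l p T (\<lambda>xs. sep_dist l (empirical xs) p)
     \<and> iid_expect l p T (\<lambda>xs. sep_dist l (empirical xs) p)
         \<le> c_s l p * sqrt (1 / (2 * pi * real T)) + C / real T" if T: "T \<ge> 1" for T
  proof
    have Tp: "real T > 0" using T by simp
    have y: "1 / (2 * pi * real T) > 0" using Tp by simp
    have sq: "sqrt (a*(1-a)/(2*pi*real T)) = sqrt (a*(1-a)*(1 / (2 * pi * real T)))" for a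
      by simp
    have "iid_expect l p T (\<lambda>xs. sep_dist l (empirical xs) p)
        \<le> iid_expect l p T (\<lambda>xs. \<Sum>j<l. (1/p j) * max 0 (p j - real (cnt {j} xs) / real T))"
      using l2 ppos by (intro iid_mono sep_upper T) (auto intro: less_imp_le)
    also have "\<dots> = (\<Sum>j<l. (1/p j) * md T (p j))"
    proof -
      have "iid_expect l p T (\<lambda>xs. max 0 (p j - real (cnt {j} xs) / real T)) = md T (p j)" if "j < l" for j
        using iid_count[of "{j}" l p T "\<lambda>k. max 0 (p j - real k / real T)"] that p_sum
        unfolding md_def by simp
      hence eq: "iid_expect l p T (\<lambda>xs. (1/p j) * max 0 (p j - real (cnt {j} xs) / real T)) = (1/p j) * md T (p j)"
        if "j < l" for j unfolding iid_cmult using that by simp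
      have "iid_expect l p T (\<lambda>xs. \<Sum>j<l. (1/p j) * max 0 (p j - real (cnt {j} xs) / real T))
         = (\<Sum>j<l. iid_expect l p T (\<lambda>xs. (1/p j) * max 0 (p j - real (cnt {j} xs) / real T)))"
        by (rule iid_sum) simp
      also have "\<dots> = (\<Sum>j<l. (1/p j) * md T (p j))" by (rule sum.cong[OF refl]) (use eq in auto)
      finally show ?thesis .
    qed
    also have "\<dots> \<le> (\<Sum>j<l. (1/p j) * (sqrt (p j*(1-p j)/(2*pi*real T)) + Kf (p j) / real T))"
    proof (rule sum_mono, rule mult_left_mono)
      fix j assume "j \<in> {..<l}"
      hence pj: "0 < p j" "p j < 1" using p_range by auto
      show "md T (p j) \<le> sqrt (p j*(1-p j)/(2*pi*real T)) + Kf (p j) / real T"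
        using Kf[OF pj] T by fastforce
      show "0 \<le> 1 / p j" using pj by simp
    qed
    also have "\<dots> = c_s l p * sqrt (1 / (2 * pi * real T)) + C / real T"
      unfolding c_s_def C_def sum_distrib_right sum_divide_distrib sum.distrib[symmetric]
    proof (rule sum.cong[OF refl])
      fix j assume "j \<in> {..<l}"
      hence pj: "0 < p j" using p_range by auto
      show "(1/p j) * (sqrt (p j*(1-p j)/(2*pi*real T)) + Kf (p j) / real T)
          = rho1 (p j) * sqrt (1 / (2 * pi * real T)) + Kf (p j) / p j / real T"
        unfolding distrib_left sq rho1_id[OF pj y] by simp
    qed
    finally show "iid_expect l p T (\<lambda>xs. sep_dist l (empirical xs) p)
         \<le> c_s l p * sqrt (1 / (2 * pi * real T)) + C / real T" .
    have "c_s_tilde l p * sqrt (1 / (2 * pi * real T)) - Ct / real T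
        = (sqrt (r*(1-r)/(2*pi*real T)) - Kf r / real T) / (r*(1-r))"
      unfolding cst r_def[symmetric] sq rho2_id2[OF r0 r1 y] Ct_def by (simp add: diff_divide_distrib)
    also have "\<dots> \<le> md T r / (r*(1-r))"
      using Kf[OF r0 r1] T r0 r1 by (intro divide_right_mono) (fastforce, simp)
    also have "md T r / (r*(1-r)) = (\<Sum>k\<le>T. bn T r k * ((1/r) * max 0 (r - real k / real T)
             + (1/(1-r)) * max 0 (real k / real T - r)))"
    proof -
      have "(\<Sum>k\<le>T. bn T r k * ((1/r) * max 0 (r - real k / real T)
             + (1/(1-r)) * max 0 (real k / real T - r))) = (1/r) * md T r + (1/(1-r)) * md T r"
      proof -
        have "(\<Sum>k\<le>T. bn T r k * ((1/r) * max 0 (r - real k / real T)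
             + (1/(1-r)) * max 0 (real k / real T - r)))
          = (\<Sum>k\<le>T. (1/r) * (bn T r k * max 0 (r - real k / real T))
             + (1/(1-r)) * (bn T r k * max 0 (real k / real T - r)))"
          by (rule sum.cong) (auto simp: algebra_simps)
        also have "\<dots> = (1/r) * (\<Sum>k\<le>T. bn T r k * max 0 (r - real k / real T))
             + (1/(1-r)) * (\<Sum>k\<le>T. bn T r k * max 0 (real k / real T - r))"
          by (simp only: sum.distrib sum_distrib_left)
        also have "\<dots> = (1/r) * md T r + (1/(1-r)) * md T r"
          unfolding md_upper_tail[OF T] by (simp add: md_def)
        finally show ?thesis .
      qed
      also have "\<dots> = md T r / (r*(1-r))" using r0 r1 by (simp add: field_simps)
      finally show ?thesis by simp
    qed
    also have "\<dots> = iid_expect l p T (\<lambda>xs. (1/r) * max 0 (r - real (cnt S xs) / real T)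
             + (1/(1-r)) * max 0 (real (cnt S xs) / real T - r))"
      using iid_count[OF S(1) p_sum, of T "\<lambda>k. (1/r) * max 0 (r - real k / real T)
             + (1/(1-r)) * max 0 (real k / real T - r)"] unfolding r_def by simp
    also have "\<dots> \<le> iid_expect l p T (\<lambda>xs. sep_dist l (empirical xs) p)"
    proof (rule iid_mono)
      show "\<And>j. j < l \<Longrightarrow> 0 \<le> p j" using ppos by (simp add: less_imp_le)
      fix xs assume xs: "xs \<in> samples l T"
      show "(1/r) * max 0 (r - real (cnt S xs) / real T)
             + (1/(1-r)) * max 0 (real (cnt S xs) / real T - r) \<le> sep_dist l (empirical xs) p"
        using sep_lower[OF xs T ppos p_sum S(1)] r0 r1 unfolding r_def by simp
    qed
    finally show "c_s_tilde l p * sqrt (1 / (2 * pi * real T)) - Ct / real T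
         \<le> iid_expect l p T (\<lambda>xs. sep_dist l (empirical xs) p)" .
  qed
  show ?thesis using C0 Ct0 main by blast
qed


end
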